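(* Fix nonnegative integers $k,\ell$. Let $\mathbf{P}:(\mathbb{Z}/2\mathbb{Z})^k\to\mathbb{R}[x]$ and $\mathbf{Q}:(\mathbb{Z}/2\mathbb{Z})^\ell\to\mathbb{R}[x]$, and define $\mathbf{S}:(\mathbb{Z}/2\mathbb{Z})^{k+\ell}\to\mathbb{R}[x]$ by $S_{\alpha\beta}=P_\alpha Q_\beta$ for $\alpha\in(\mathbb{Z}/2\mathbb{Z})^k$, $\beta\in(\mathbb{Z}/2\mathbb{Z})^\ell$. If $\mathbf{P}$ is an interpolatory $k$-cube and $\mathbf{Q}$ is an interpolatory $\ell$-cube, then $\mathbf{S}$ is an interpolatory $(k+\ell)$-cube.
   Context: Elements of $(\mathbb{Z}/2\mathbb{Z})^k$ are strings $\alpha=\alpha_1\cdots\alpha_k$, and $\eta(i)$ has a single $1$ in coordinate $i$. Interpolation operators. For $\lambda,\rho\ge0$, ${}_1\mathrm{I}^\rho_\lambda$ maps $\mathbf{P}:(\mathbb{Z}/2\mathbb{Z})^k\to\mathbb{R}[x]$ to $\mathbf{Q}:(\mathbb{Z}/2\mathbb{Z})^{k-1}\to\mathbb{R}[x]$ with $Q_\alpha=\lambda P_{1\alpha}+\rho P_{0\alpha}$. For $k$-tuples $\lambda=(\lambda_1,\ldots,\lambda_k)$ and $\rho=(\rho_1,\ldots,\rho_k)$ of nonnegative reals, $\mathbb{I}^\rho_\lambda={}_1\mathrm{I}^{\rho_k}_{\lambda_k}\cdots{}_1\mathrm{I}^{\rho_1}_{\lambda_1}$, which yields a single polynomial. Flip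 operators. $(\Phi_i\mathbf{P})_\alpha=xP_{\alpha+\eta(i)}$ if $\alpha_i=0$, and $=P_{\alpha+\eta(i)}$ if $\alpha_i=1$. For $S\subseteq\{1,\ldots,k\}$, $\Phi_S=\prod_{i\in S}\Phi_i$. Interpolatory $k$-cubes. $\mathbf{P}$ is an interpolatory $k$-cube if, for all $k$-tuples $\lambda,\rho$ of positive reals and all $S\subseteq\{1,\ldots,k\}$, $\mathbb{I}^\rho_\lambda\Phi_S\mathbf{P}$ is standard and has only nonpositive zeros. For $k=0$ this means the single polynomial is standard with only nonpositive zeros. Standard means $\equiv0$ or positive leading coefficient. Only nonpositive zeros means $\equiv0$ or all zeros real and $\le0$. *)

theory Defs
  imports "HOL-Computational_Algebra.Polynomial" Complex_Main
begin

text \<open>A map (Z/2Z)^k -> R[x] is modelled as a function on bool lists; only lists of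
  length k matter. True = 1, False = 0. Coordinates are 0-indexed (i = 0..k-1).\<close>

type_synonym cube = "bool list \<Rightarrow> real poly"

definition interp1 :: "real \<Rightarrow> real \<Rightarrow> cube \<Rightarrow> cube" where
  "interp1 lam rho P = (\<lambda>\<alpha>. smult lam (P (True # \<alpha>)) + smult rho (P (False # \<alpha>)))"

text \<open>interp [l1..lk] [r1..rk] = 1I^{rk}_{lk} o ... o 1I^{r1}_{l1} (l1,r1 applied first).\<close>
fun interp :: "real list \<Rightarrow> real list \<Rightarrow> cube \<Rightarrow> cube" where
  "interp (l # ls) (r # rs) P = interp ls rs (interp1 l r P)"
| "interp _ _ P = P"

definition flip :: "nat \<Rightarrow> cube \<Rightarrow> cube" where
  "flip i P = (\<lambda>\<alpha>. if \<not> \<alpha> ! i then [:0, 1:] * P (\<alpha>[i := \<not> \<alpha> ! i])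
                    else P (\<alpha>[i := \<not> \<alpha> ! i]))"

definition flipS :: "nat set \<Rightarrow> cube \<Rightarrow> cube" where
  "flipS S P = fold flip (sorted_list_of_set S) P"

definition standard :: "real poly \<Rightarrow> bool" where
  "standard p \<longleftrightarrow> p = 0 \<or> lead_coeff p > 0"

definition nonpos_zeros :: "real poly \<Rightarrow> bool" where
  "nonpos_zeros p \<longleftrightarrow> p = 0 \<or>
     (\<forall>z::complex. poly (map_poly of_real p) z = 0 \<longrightarrow> Im z = 0 \<and> Re z \<le> 0)"

definition interpolatory_cube :: "nat \<Rightarrow> cube \<Rightarrow> bool" where
  "interpolatory_cube k P \<longleftrightarrow>
     (\<forall>lam rho S. length lam = k \<and> length rho = k \<and> (\<forall>x\<in>set lam. x > 0) \<and>
        (\<forall>x\<in>set rho. x > 0) \<and> S \<subseteq> {..<k} \<longrightarrow>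
        standard (interp lam rho (flipS S P) []) \<and>
        nonpos_zeros (interp lam rho (flipS S P) []))"

end

theory Submission
  imports Defs
begin

definition tens :: "nat \<Rightarrow> cube \<Rightarrow> cube \<Rightarrow> cube" where
  "tens k P Q = (\<lambda>\<gamma>. P (take k \<gamma>) * Q (drop k \<gamma>))"

definition eqn :: "nat \<Rightarrow> cube \<Rightarrow> cube \<Rightarrow> bool" where
  "eqn n F G \<longleftrightarrow> (\<forall>\<alpha>. length \<alpha> = n \<longrightarrow> F \<alpha> = G \<alpha>)"

lemma eqn_trans: "eqn n F G \<Longrightarrow> eqn n G H \<Longrightarrow> eqn n F H"
  by (simp add: eqn_def)

lemma flip_eqn: "eqn n F G \<Longrightarrow> eqn n (flip i F) (flip i G)"
  by (simp add: eqn_def flip_def)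

lemma fold_flip_eqn: "eqn n F G \<Longrightarrow> eqn n (fold flip xs F) (fold flip xs G)"
  by (induction xs arbitrary: F G) (auto simp: flip_eqn)

lemma flip_tens_lo:
  assumes "i < k"
  shows "eqn (k + l) (flip i (tens k P Q)) (tens k (flip i P) Q)"
  unfolding eqn_def
proof (intro allI impI)
  fix \<gamma> :: "bool list" assume len: "length \<gamma> = k + l"
  have t: "take k (\<gamma>[i := v]) = (take k \<gamma>)[i := v]" for v
    by (simp add: take_update_swap)
  have d: "drop k (\<gamma>[i := v]) = drop k \<gamma>" for v
    using assms by (simp add: drop_update_cancel)
  have n: "take k \<gamma> ! i = \<gamma> ! i" using assms by simp
  show "flip i (tens k P Q) \<gamma> = tens k (flip i P) Q \<gamma>"
    unfolding flip_def tens_def using t d n by (simp add: mult.assoc)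
qed

lemma flip_tens_hi:
  assumes "k \<le> i"
  shows "eqn (k + l) (flip i (tens k P Q)) (tens k P (flip (i - k) Q))"
  unfolding eqn_def
proof (intro allI impI)
  fix \<gamma> :: "bool list" assume len: "length \<gamma> = k + l"
  have t: "take k (\<gamma>[i := v]) = take k \<gamma>" for v
    using assms by simp
  have d: "drop k (\<gamma>[i := v]) = (drop k \<gamma>)[i - k := v]" for v
    using assms by (simp add: drop_update_swap)
  have n: "drop k \<gamma> ! (i - k) = \<gamma> ! i" using assms len by simp
  show "flip i (tens k P Q) \<gamma> = tens k P (flip (i - k) Q) \<gamma>"
    unfolding flip_def tens_def using t d n by (simp add: mult_ac)
qed

lemma fold_flip_tens:
  "eqn (k + l) (fold flip xs (tens k P Q))
     (tens k (fold flip (filter (\<lambda>i. i < k) xs) P)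
             (fold flip (map (\<lambda>i. i - k) (filter (\<lambda>i. \<not> i < k) xs)) Q))"
proof (induction xs arbitrary: P Q)
  case Nil
  then show ?case by (simp add: eqn_def)
next
  case (Cons x xs)
  show ?case
  proof (cases "x < k")
    case True
    have "eqn (k + l) (fold flip xs (flip x (tens k P Q))) (fold flip xs (tens k (flip x P) Q))"
      by (rule fold_flip_eqn[OF flip_tens_lo[OF True]])
    from eqn_trans[OF this Cons.IH[of "flip x P" Q]] show ?thesis using True by simp
  next
    case False
    have "eqn (k + l) (fold flip xs (flip x (tens k P Q))) (fold flip xs (tens k P (flip (x - k) Q)))"
      using False by (intro fold_flip_eqn flip_tens_hi) simp
    from eqn_trans[OF this Cons.IH[of P "flip (x - k) Q"]] show ?thesis using False by simp
  qed
qed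

lemma interp_eqn:
  "length lam = n \<Longrightarrow> length rho = n \<Longrightarrow> eqn (n + m) F G \<Longrightarrow>
   eqn m (interp lam rho F) (interp lam rho G)"
proof (induction lam arbitrary: n rho F G)
  case Nil
  then show ?case by simp
next
  case (Cons a lam)
  then obtain r rs where rho: "rho = r # rs" by (cases rho) auto
  have "eqn (n - 1 + m) (interp1 a r F) (interp1 a r G)"
    using Cons.prems by (auto simp: eqn_def interp1_def)
  then show ?case using Cons rho by (cases n) auto
qed

lemma interp_append:
  "length lam1 = length rho1 \<Longrightarrow>
   interp (lam1 @ lam2) (rho1 @ rho2) F = interp lam2 rho2 (interp lam1 rho1 F)"
proof (induction lam1 arbitrary: rho1 F)
  case Nil
  then show ?case by simp
next
  case (Cons a lam1)
  then obtain r rs where rho: "rho1 = r # rs" by (cases rho1) auto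
  then show ?case using Cons by simp
qed

lemma interp_tens:
  "length lam = k \<Longrightarrow> length rho = k \<Longrightarrow>
   interp lam rho (tens k P Q) = (\<lambda>\<gamma>. interp lam rho P [] * Q \<gamma>)"
proof (induction lam arbitrary: k rho P)
  case Nil
  then show ?case by (simp add: tens_def)
next
  case (Cons a lam)
  then obtain r rs where rho: "rho = r # rs" by (cases rho) auto
  have "interp1 a r (tens k P Q) = tens (k - 1) (interp1 a r P) Q"
    using Cons.prems by (cases k) (auto simp: tens_def interp1_def fun_eq_iff algebra_simps)
  then show ?case using Cons rho by simp
qed

lemma interp_scale:
  "interp lam rho (\<lambda>\<gamma>. c * Q \<gamma>) = (\<lambda>\<gamma>. c * interp lam rho Q \<gamma>)"
proof (induction lam rho Q rule: interp.induct)
  case (1 l ls r rs P)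
  have "interp1 l r (\<lambda>\<gamma>. c * P \<gamma>) = (\<lambda>\<gamma>. c * interp1 l r P \<gamma>)"
    by (auto simp: interp1_def fun_eq_iff algebra_simps)
  then show ?case using 1 by simp
qed auto

lemma standard_mult: "standard p \<Longrightarrow> standard q \<Longrightarrow> standard (p * q)"
  by (auto simp: standard_def lead_coeff_mult)

lemma map_of_real_mult:
  "map_poly (of_real :: real \<Rightarrow> complex) (p * q) = map_poly of_real p * map_poly of_real q"
  by (rule poly_eqI) (simp add: coeff_map_poly coeff_mult)

lemma nonpos_mult: "nonpos_zeros p \<Longrightarrow> nonpos_zeros q \<Longrightarrow> nonpos_zeros (p * q)"
  by (auto simp: nonpos_zeros_def map_of_real_mult)

theorem lemma4p6:
  fixes k l :: nat and P Q :: cube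
  assumes "interpolatory_cube k P" and "interpolatory_cube l Q"
  shows "interpolatory_cube (k + l) (\<lambda>\<gamma>. P (take k \<gamma>) * Q (drop k \<gamma>))"
  unfolding interpolatory_cube_def
proof (intro allI impI)
  fix lam rho :: "real list" and S :: "nat set"
  assume h: "length lam = k + l \<and> length rho = k + l \<and> (\<forall>x\<in>set lam. x > 0) \<and>
        (\<forall>x\<in>set rho. x > 0) \<and> S \<subseteq> {..<k + l}"
  define S1 where "S1 = {i\<in>S. i < k}"
  define S2 where "S2 = (\<lambda>i. i - k) ` {i\<in>S. \<not> i < k}"
  have finS: "finite S" using h finite_subset by blast
  have L1: "filter (\<lambda>i. i < k) (sorted_list_of_set S) = sorted_list_of_set S1"
  proof -
    have "finite S1" unfolding S1_def using finS by auto
    moreover have "set (filter (\<lambda>i. i < k) (sorted_list_of_set S)) = S1"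
      unfolding S1_def using finS by auto
    moreover have "sorted (filter (\<lambda>i. i < k) (sorted_list_of_set S))"
      by (intro sorted_wrt_filter) simp
    moreover have "distinct (filter (\<lambda>i. i < k) (sorted_list_of_set S))" by simp
    ultimately have "sorted_list_of_set S1 = filter (\<lambda>i. i < k) (sorted_list_of_set S)"
      by (intro sorted_distinct_set_unique) simp_all
    then show ?thesis by simp
  qed
  have L2: "map (\<lambda>i. i - k) (filter (\<lambda>i. \<not> i < k) (sorted_list_of_set S)) = sorted_list_of_set S2"
  proof -
    let ?xs = "filter (\<lambda>i. \<not> i < k) (sorted_list_of_set S)"
    have s: "sorted ?xs" "distinct ?xs" by (intro sorted_wrt_filter, simp) simp
    have ge: "\<forall>x\<in>set ?xs. k \<le> x" by auto
    have inj: "inj_on (\<lambda>i. i - k) (set ?xs)" using ge by (auto simp: inj_on_def)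
    have "sorted (map (\<lambda>i. i - k) ?xs)"
      unfolding sorted_map by (rule sorted_wrt_mono_rel[OF _ s(1)]) (simp add: diff_le_mono)
    moreover have "distinct (map (\<lambda>i. i - k) ?xs)" using s(2) inj by (simp add: distinct_map)
    moreover have "set (map (\<lambda>i. i - k) ?xs) = S2" unfolding S2_def using finS by auto
    moreover have "finite S2" unfolding S2_def using finS by auto
    ultimately have "sorted_list_of_set S2 = map (\<lambda>i. i - k) ?xs"
      by (intro sorted_distinct_set_unique) simp_all
    then show ?thesis by simp
  qed
  have E: "eqn (k + l) (flipS S (tens k P Q)) (tens k (flipS S1 P) (flipS S2 Q))"
    unfolding flipS_def using fold_flip_tens[of k l "sorted_list_of_set S" P Q] L1 L2 by simp
  define lam1 where "lam1 = take k lam"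
  define lam2 where "lam2 = drop k lam"
  define rho1 where "rho1 = take k rho"
  define rho2 where "rho2 = drop k rho"
  have lens: "length lam1 = k" "length rho1 = k" "length lam2 = l" "length rho2 = l"
    using h by (auto simp: lam1_def lam2_def rho1_def rho2_def)
  have eq: "interp lam rho (flipS S (tens k P Q)) [] =
        interp lam1 rho1 (flipS S1 P) [] * interp lam2 rho2 (flipS S2 Q) []"
  proof -
    have "eqn 0 (interp lam rho (flipS S (tens k P Q))) (interp lam rho (tens k (flipS S1 P) (flipS S2 Q)))"
      using interp_eqn[of lam "k + l" rho 0] E h by simp
    then have "interp lam rho (flipS S (tens k P Q)) [] = interp lam rho (tens k (flipS S1 P) (flipS S2 Q)) []"
      by (simp add: eqn_def)
    also have "\<dots> = interp lam2 rho2 (interp lam1 rho1 (tens k (flipS S1 P) (flipS S2 Q))) []"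
      using interp_append[of lam1 rho1 lam2 rho2] lens by (simp add: lam1_def lam2_def rho1_def rho2_def)
    also have "\<dots> = interp lam1 rho1 (flipS S1 P) [] * interp lam2 rho2 (flipS S2 Q) []"
      using lens by (simp add: interp_tens interp_scale)
    finally show ?thesis .
  qed
  have pos: "\<forall>x\<in>set lam1. x > 0" "\<forall>x\<in>set rho1. x > 0" "\<forall>x\<in>set lam2. x > 0" "\<forall>x\<in>set rho2. x > 0"
    using h by (auto simp: lam1_def lam2_def rho1_def rho2_def dest: in_set_takeD in_set_dropD)
  have sub: "S1 \<subseteq> {..<k}" "S2 \<subseteq> {..<l}" using h by (auto simp: S1_def S2_def)
  have A: "standard (interp lam1 rho1 (flipS S1 P) []) \<and> nonpos_zeros (interp lam1 rho1 (flipS S1 P) [])"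
    using assms(1) lens pos sub unfolding interpolatory_cube_def by blast
  have B: "standard (interp lam2 rho2 (flipS S2 Q) []) \<and> nonpos_zeros (interp lam2 rho2 (flipS S2 Q) [])"
    using assms(2) lens pos sub unfolding interpolatory_cube_def by blast
  have T: "(\<lambda>\<gamma>. P (take k \<gamma>) * Q (drop k \<gamma>)) = tens k P Q" by (simp add: tens_def)
  show "standard (interp lam rho (flipS S (\<lambda>\<gamma>. P (take k \<gamma>) * Q (drop k \<gamma>))) []) \<and>
        nonpos_zeros (interp lam rho (flipS S (\<lambda>\<gamma>. P (take k \<gamma>) * Q (drop k \<gamma>))) [])"
    unfolding T eq using A B standard_mult nonpos_mult by blast
qed

end
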